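(* Let $k\geq 2$, let $0\leq r<1$ be real, and let $H$ be a $k$-hypertree with $|H|$ vertices and $e(H)$ edges. Then for every $k$-hypergraph $X$ with $n$ vertices and $n^{k-r}$ edges, $|\mathrm{Inj}(H,X)|=\Omega(n^{|H|-e(H)r})$ as $n\to\infty$, where the implicit constant depends only on $H$, $k$ and $r$.
   Context: A $k$-hypertree is a $k$-hypergraph built from a single edge by repeatedly adding an edge that meets the current hypergraph in exactly $k-1$ vertices all contained in one existing edge (so each new edge adds exactly one new vertex). $\mathrm{Inj}(H,X)$ is the set of injective maps $f$ from the vertices of $H$ to the vertices of $X$ such that the image of every edge of $H$ is an edge of $X$. *)

theory Defs
  imports Complex_Main "HOL-Library.FuncSet"
begin

definition k_hypergraph :: "nat \<Rightarrow> 'a set \<Rightarrow> 'a set set \<Rightarrow> bool" where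
  "k_hypergraph k V E \<longleftrightarrow> finite V \<and> (\<forall>e\<in>E. e \<subseteq> V \<and> card e = k)"

inductive hypertree :: "nat \<Rightarrow> 'a set \<Rightarrow> 'a set set \<Rightarrow> bool" for k where
  base: "card e = k \<Longrightarrow> hypertree k e {e}"
| step: "hypertree k V E \<Longrightarrow> f \<in> E \<Longrightarrow> S \<subseteq> f \<Longrightarrow> card S = k - 1 \<Longrightarrow> v \<notin> V
          \<Longrightarrow> hypertree k (insert v V) (insert (insert v S) E)"

definition Inj :: "'a set \<Rightarrow> 'a set set \<Rightarrow> 'b set \<Rightarrow> 'b set set \<Rightarrow> ('a \<Rightarrow> 'b) set" where
  "Inj VH EH VX EdX = {f \<in> VH \<rightarrow>\<^sub>E VX. inj_on f VH \<and> (\<forall>e\<in>EH. f ` e \<in> EdX)}"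

end

theory Submission imports Defs begin

definition shadow :: "nat \<Rightarrow> 'b set set \<Rightarrow> 'b set set" where
  "shadow k F = {S. \<exists>g\<in>F. S \<subseteq> g \<and> card S = k - 1}"

definition closedF :: "nat \<Rightarrow> nat \<Rightarrow> 'b set set \<Rightarrow> bool" where
  "closedF k d F \<longleftrightarrow> (\<forall>g\<in>F. \<forall>S. S \<subseteq> g \<and> card S = k - 1 \<longrightarrow> d \<le> card {h\<in>F. S \<subseteq> h})"

lemma ht_inv:
  assumes "hypertree k V E" "k \<ge> 1"
  shows "finite V \<and> finite E \<and> (\<forall>e\<in>E. e \<subseteq> V \<and> card e = k) \<and> E \<noteq> {} \<and> card V + 1 = k + card E"
  using assms
proof (induction rule: hypertree.induct)
  case (base e)
  then have "finite e" using card_ge_0_finite[of e] by simp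
  then show ?case using base by auto
next
  case (step V E f S v)
  then have fin: "finite f" "f \<subseteq> V" by (auto intro: finite_subset)
  then have "finite S" using step(3) finite_subset by blast
  have vS: "v \<notin> S" using step fin by auto
  have c1: "card (insert v S) = k" using vS \<open>finite S\<close> step by simp
  have "insert v S \<notin> E" using step by auto
  then have c2: "card (insert (insert v S) E) = card E + 1" using step by simp
  have c3: "card (insert v V) = card V + 1" using step by simp
  show ?case using step c1 c2 c3 fin by auto
qed

lemma deletion:
  assumes "finite VX" "\<forall>g\<in>F. g \<subseteq> VX"
  shows "\<exists>F'\<subseteq>F. closedF k d F' \<and> card F \<le> card F' + d * card (shadow k F)"
  using assms
proof (induction "card (shadow k F)" arbitrary: F rule: less_induct)
  case less
  show ?case
  proof (cases "closedF k d F")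
    case True
    then show ?thesis by auto
  next
    case False
    then obtain g S where gS: "g \<in> F" "S \<subseteq> g" "card S = k - 1" "card {h\<in>F. S \<subseteq> h} < d"
      unfolding closedF_def by (meson not_le)
    define F1 where "F1 = {h\<in>F. \<not> S \<subseteq> h}"
    have finF: "finite F" using less.prems by (meson Pow_iff finite_Pow_iff finite_subset subsetI)
    have finsh: "finite (shadow k F)"
    proof -
      have "shadow k F \<subseteq> Pow VX" using less.prems unfolding shadow_def by auto
      then show ?thesis using less.prems finite_subset by blast
    qed
    have Ssh: "S \<in> shadow k F" using gS unfolding shadow_def by auto
    have "shadow k F1 \<subseteq> shadow k F - {S}" unfolding shadow_def F1_def by auto
    then have sub: "shadow k F1 \<subset> shadow k F" using Ssh by auto
    then have lt: "card (shadow k F1) < card (shadow k F)" using finsh psubset_card_mono by blast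
    have "\<forall>g\<in>F1. g \<subseteq> VX" using less.prems unfolding F1_def by auto
    from less.hyps[OF lt less.prems(1) this] obtain F' where
      F': "F' \<subseteq> F1" "closedF k d F'" "card F1 \<le> card F' + d * card (shadow k F1)" by blast
    have "F = F1 \<union> {h\<in>F. S \<subseteq> h}" unfolding F1_def by auto
    then have "card F \<le> card F1 + card {h\<in>F. S \<subseteq> h}" by (metis card_Un_le)
    also have "\<dots> \<le> card F1 + d" using gS by simp
    also have "\<dots> \<le> card F' + d * card (shadow k F1) + d" using F' by simp
    also have "\<dots> \<le> card F' + d * card (shadow k F)"
    proof -
      have "card (shadow k F1) + 1 \<le> card (shadow k F)" using lt by simp
      then have "d * (card (shadow k F1) + 1) \<le> d * card (shadow k F)" by (rule mult_le_mono2)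
      then show ?thesis by (simp add: algebra_simps)
    qed
    finally show ?thesis using F' F1_def by auto
  qed
qed

lemma Inj_finite: "finite V \<Longrightarrow> finite VX \<Longrightarrow> finite (Inj V E VX F)"
  unfolding Inj_def by (rule finite_subset[OF _ finite_PiE]) auto

lemma Inj_mono: "F' \<subseteq> F \<Longrightarrow> Inj V E VX F' \<subseteq> Inj V E VX F"
  unfolding Inj_def by auto

lemma count_base:
  fixes e :: "'a set" and F :: "'b set set"
  assumes "card e = k" "k \<ge> 1" "finite VX" "\<forall>g\<in>F. g \<subseteq> VX \<and> card g = k"
  shows "card F \<le> card (Inj e {e} VX F)"
proof -
  have fe: "finite e" using assms card_ge_0_finite[of e] by simp
  define \<phi> :: "'b set \<Rightarrow> 'a \<Rightarrow> 'b" where "\<phi> g = restrict (SOME h. bij_betw h e g) e" for g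
  have bij: "bij_betw (SOME h. bij_betw h e g) e g" if "g \<in> F" for g
  proof -
    have "finite g" using that assms card_ge_0_finite[of g] by auto
    then have "\<exists>h. bij_betw h e g" using fe assms that by (metis finite_same_card_bij)
    then show ?thesis by (rule someI_ex)
  qed
  have im: "\<phi> g ` e = g" if "g \<in> F" for g
    using bij[OF that] unfolding \<phi>_def bij_betw_def by auto
  have "\<phi> ` F \<subseteq> Inj e {e} VX F"
  proof
    fix x assume "x \<in> \<phi> ` F"
    then obtain g where g: "g \<in> F" "x = \<phi> g" by auto
    have "inj_on x e" using bij[OF g(1)] g(2) unfolding \<phi>_def bij_betw_def
      by (simp add: inj_on_def)
    moreover have "x \<in> e \<rightarrow>\<^sub>E VX" using im[OF g(1)] g assms unfolding \<phi>_def by auto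
    ultimately show "x \<in> Inj e {e} VX F" unfolding Inj_def using im[OF g(1)] g by auto
  qed
  moreover have "inj_on \<phi> F" using im by (metis inj_onI)
  ultimately show ?thesis
    by (metis Inj_finite assms(3) card_image card_mono fe)
qed

lemma Wcard:
  fixes \<phi> :: "'a \<Rightarrow> 'b"
  assumes "\<phi> \<in> Inj V E VX F" "finite V" "\<forall>e\<in>E. e \<subseteq> V" "f \<in> E" "S \<subseteq> f"
    "card S = k - 1" "k \<ge> 1" "finite VX" "\<forall>g\<in>F. g \<subseteq> VX \<and> card g = k" "closedF k d F"
  shows "d - card V \<le> card {w\<in>VX. w \<notin> \<phi> ` V \<and> insert w (\<phi> ` S) \<in> F}"
proof -
  let ?T = "\<phi> ` S"
  have inj: "inj_on \<phi> V" and img: "\<phi> ` f \<in> F" using assms unfolding Inj_def by auto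
  have fV: "f \<subseteq> V" using assms by auto
  have SV: "S \<subseteq> V" using fV assms by auto
  have cT: "card ?T = k - 1" using card_image[OF inj_on_subset[OF inj SV]] assms by simp
  have "?T \<subseteq> \<phi> ` f" using assms by auto
  then have d1: "d \<le> card {h\<in>F. ?T \<subseteq> h}" using assms(10) img cT unfolding closedF_def by blast
  define A where "A = {w\<in>VX - ?T. insert w ?T \<in> F}"
  have finT: "finite ?T" using SV assms(2) finite_subset by blast
  have "{h\<in>F. ?T \<subseteq> h} \<subseteq> (\<lambda>w. insert w ?T) ` A"
  proof
    fix h assume h: "h \<in> {h\<in>F. ?T \<subseteq> h}"
    have fh: "finite h" using h assms(7,9) card_ge_0_finite[of h] by auto
    have "card (h - ?T) = 1" using h assms(7,9) cT finT fh by (simp add: card_Diff_subset)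
    then obtain w where w: "h - ?T = {w}" using card_1_singletonE by blast
    then have "h = insert w ?T" using h by auto
    moreover have "w \<in> A" unfolding A_def using w h assms(9) \<open>h = insert w ?T\<close> by auto
    ultimately show "h \<in> (\<lambda>w. insert w ?T) ` A" by blast
  qed
  moreover have finA: "finite A" unfolding A_def using assms(8) by auto
  ultimately have "card {h\<in>F. ?T \<subseteq> h} \<le> card ((\<lambda>w. insert w ?T) ` A)"
    by (intro card_mono) auto
  also have "\<dots> \<le> card A" by (rule card_image_le[OF finA])
  finally have d2: "d \<le> card A" using d1 by linarith
  have "A \<subseteq> {w\<in>VX. w \<notin> \<phi> ` V \<and> insert w ?T \<in> F} \<union> \<phi> ` V" unfolding A_def by auto
  moreover have "finite ({w\<in>VX. w \<notin> \<phi> ` V \<and> insert w ?T \<in> F} \<union> \<phi> ` V)"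
    using assms(2,8) by auto
  ultimately have "card A \<le> card ({w\<in>VX. w \<notin> \<phi> ` V \<and> insert w ?T \<in> F} \<union> \<phi> ` V)"
    by (rule card_mono[rotated])
  also have "\<dots> \<le> card {w\<in>VX. w \<notin> \<phi> ` V \<and> insert w ?T \<in> F} + card (\<phi> ` V)"
    by (rule card_Un_le)
  finally have "card A \<le> card {w\<in>VX. w \<notin> \<phi> ` V \<and> insert w ?T \<in> F} + card (\<phi> ` V)" .
  moreover have "card (\<phi> ` V) \<le> card V" by (rule card_image_le[OF assms(2)])
  ultimately show ?thesis using d2 by linarith
qed

lemma count:
  fixes V :: "'a set" and F :: "'b set set"
  assumes "hypertree k V E" "k \<ge> 1" "finite VX" "\<forall>g\<in>F. g \<subseteq> VX \<and> card g = k" "closedF k d F"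
  shows "card F * (d - card V) ^ (card E - 1) \<le> card (Inj V E VX F)"
  using assms
proof (induction rule: hypertree.induct)
  case (base e)
  then show ?case using count_base[of e k VX F] by simp
next
  case (step V E f S v)
  have ht: "hypertree k V E" and fE: "f \<in> E" and Sf: "S \<subseteq> f" and cS: "card S = k - 1"
    and vV: "v \<notin> V" by fact+
  note k1 = step.prems(1) and fVX = step.prems(2) and Fk = step.prems(3) and cl = step.prems(4)
  have inv: "finite V" "finite E" "\<forall>e\<in>E. e \<subseteq> V \<and> card e = k" "E \<noteq> {}"
    using ht_inv[OF ht k1] by auto
  have cE: "card (insert (insert v S) E) = card E + 1" and cV: "card (insert v V) = card V + 1"
  proof -
    have "insert v S \<notin> E" using vV inv by auto
    then show "card (insert (insert v S) E) = card E + 1" using inv by simp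
    show "card (insert v V) = card V + 1" using vV inv by simp
  qed
  have vS: "v \<notin> S" using vV Sf fE inv(3) by blast
  define I where "I = Inj V E VX F"
  define W where "W \<phi> = {w\<in>VX. w \<notin> \<phi> ` V \<and> insert w (\<phi> ` S) \<in> F}" for \<phi> :: "'a \<Rightarrow> 'b"
  define \<Phi> where "\<Phi> = (\<lambda>(\<phi>::'a \<Rightarrow> 'b, w). \<phi>(v := w))"
  have IH: "card F * (d - card V) ^ (card E - 1) \<le> card I" using step.IH k1 fVX Fk cl I_def by simp
  have Wc: "d - card V \<le> card (W \<phi>)" if "\<phi> \<in> I" for \<phi>
    unfolding W_def using Wcard[of \<phi> V E VX F f S k d] that I_def inv step by blast
  have finI: "finite I" unfolding I_def using Inj_finite inv step by blast
  have finW: "finite (W \<phi>)" for \<phi> unfolding W_def using step by auto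
  have sub: "\<Phi> ` Sigma I W \<subseteq> Inj (insert v V) (insert (insert v S) E) VX F"
  proof
    fix x assume "x \<in> \<Phi> ` Sigma I W"
    then obtain \<phi> w where pw: "\<phi> \<in> I" "w \<in> W \<phi>" "x = \<phi>(v := w)" unfolding \<Phi>_def by auto
    have \<phi>: "\<phi> \<in> V \<rightarrow>\<^sub>E VX" "inj_on \<phi> V" "\<forall>e\<in>E. \<phi> ` e \<in> F" using pw by (auto simp: I_def Inj_def)
    have w: "w \<in> VX" "w \<notin> \<phi> ` V" "insert w (\<phi> ` S) \<in> F" using pw by (auto simp: W_def)
    have "x \<in> insert v V \<rightarrow>\<^sub>E VX" unfolding pw(3) using \<phi>(1) w(1) vV by (auto simp: PiE_iff extensional_def)
    moreover have "inj_on x (insert v V)"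
    proof -
      have "inj_on x V" unfolding pw(3) by (rule inj_on_fun_updI[OF \<phi>(2) w(2)])
      moreover have "x ` V = \<phi> ` V" using pw(3) vV by auto
      moreover have "x v \<notin> x ` (V - {v})" using w(2) pw(3) \<open>x ` V = \<phi> ` V\<close> vV by simp
      ultimately show ?thesis by (simp add: inj_on_insert)
    qed
    moreover have "\<forall>e\<in>insert (insert v S) E. x ` e \<in> F"
    proof
      fix e assume e: "e \<in> insert (insert v S) E"
      show "x ` e \<in> F"
      proof (cases "e \<in> E")
        case True
        then have "v \<notin> e" using inv vV by auto
        then have "x ` e = \<phi> ` e" using pw(3) by auto
        then show ?thesis using \<phi>(3) True by auto
      next
        case False
        then have "e = insert v S" using e by auto
        then have "x ` e = insert w (\<phi> ` S)" using pw(3) vS by auto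
        then show ?thesis using w(3) by auto
      qed
    qed
    ultimately show "x \<in> Inj (insert v V) (insert (insert v S) E) VX F" unfolding Inj_def by auto
  qed
  have inj: "inj_on \<Phi> (Sigma I W)"
  proof (rule inj_onI)
    fix a b assume a: "a \<in> Sigma I W" and b: "b \<in> Sigma I W" and eq: "\<Phi> a = \<Phi> b"
    obtain \<phi>1 w1 where a': "a = (\<phi>1, w1)" "\<phi>1 \<in> I" using a by auto
    obtain \<phi>2 w2 where b': "b = (\<phi>2, w2)" "\<phi>2 \<in> I" using b by auto
    have e: "\<phi>1(v := w1) = \<phi>2(v := w2)" using eq a' b' by (simp add: \<Phi>_def)
    then have "w1 = w2" by (metis fun_upd_same)
    moreover have "\<phi>1 = \<phi>2"
    proof
      fix y
      show "\<phi>1 y = \<phi>2 y"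
      proof (cases "y = v")
        case True
        have "\<phi>1 \<in> V \<rightarrow>\<^sub>E VX" "\<phi>2 \<in> V \<rightarrow>\<^sub>E VX" using a' b' by (auto simp: I_def Inj_def)
        then show ?thesis using True vV by (simp add: PiE_def extensional_def)
      next
        case False
        then show ?thesis using e by (metis fun_upd_other)
      qed
    qed
    ultimately show "a = b" using a' b' by simp
  qed
  have "card I * (d - card V) \<le> sum (\<lambda>\<phi>. card (W \<phi>)) I"
    using sum_bounded_below[of I "d - card V" "\<lambda>\<phi>. card (W \<phi>)"] Wc by auto
  also have "\<dots> = card (Sigma I W)" using finI finW by (simp add: card_SigmaI)
  also have "\<dots> = card (\<Phi> ` Sigma I W)" using card_image[OF inj] by simp
  also have "\<dots> \<le> card (Inj (insert v V) (insert (insert v S) E) VX F)"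
    using sub Inj_finite[of "insert v V" VX] inv step by (intro card_mono) auto
  finally have last: "card I * (d - card V) \<le> card (Inj (insert v V) (insert (insert v S) E) VX F)" .
  have "card E \<ge> 1" using inv by (simp add: Suc_leI card_gt_0_iff)
  then have ce: "card E = Suc (card E - 1)" by simp
  have "(d - (card V + 1)) ^ card E \<le> (d - card V) ^ card E"
    by (rule power_mono) auto
  also have "\<dots> = (d - card V) ^ (card E - 1) * (d - card V)"
    by (subst ce) (simp only: power_Suc2)
  finally have "(d - (card V + 1)) ^ card E \<le> (d - card V) ^ (card E - 1) * (d - card V)" .
  then have "card F * (d - card (insert v V)) ^ (card (insert (insert v S) E) - 1)
        \<le> card F * (d - card V) ^ (card E - 1) * (d - card V)" using cE cV by simp
  also have "\<dots> \<le> card I * (d - card V)" using IH by (rule mult_le_mono1)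
  finally show ?case using last by linarith
qed

lemma shadow_card:
  assumes "finite VX" "\<forall>g\<in>F. g \<subseteq> VX"
  shows "card (shadow k F) \<le> card VX ^ (k - 1)"
proof -
  have "shadow k F \<subseteq> {B. B \<subseteq> VX \<and> card B = k - 1}" using assms unfolding shadow_def by auto
  then have "card (shadow k F) \<le> card {B. B \<subseteq> VX \<and> card B = k - 1}"
    using assms(1) by (intro card_mono) auto
  also have "\<dots> = card VX choose (k - 1)" using n_subsets[OF assms(1)] .
  also have "\<dots> \<le> card VX ^ (k - 1)"
  proof (cases "k - 1 \<le> card VX")
    case True then show ?thesis by (rule binomial_le_pow)
  next
    case False then show ?thesis by (simp add: binomial_eq_0)
  qed
  finally show ?thesis .
qed

theorem lemma8:
  fixes k :: nat and r :: real and V :: "'a set" and E :: "'a set set"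
  assumes "k \<ge> 2" and "0 \<le> r" and "r < 1" and "hypertree k V E"
  shows "\<exists>C>0. \<exists>N::nat. \<forall>n\<ge>N. \<forall>(VX::nat set) EdX.
           k_hypergraph k VX EdX \<and> card VX = n \<and> real (card EdX) \<ge> real n powr (real k - r)
           \<longrightarrow> real (card (Inj V E VX EdX)) \<ge> C * real n powr (real (card V) - real (card E) * r)"
proof -
  have k1: "k \<ge> 1" using assms by simp
  have inv: "finite V" "finite E" "\<forall>e\<in>E. e \<subseteq> V \<and> card e = k" "E \<noteq> {}" "card V + 1 = k + card E"
    using ht_inv[OF assms(4) k1] by auto
  define e where "e = card E"
  define m where "m = card V"
  have e1: "e \<ge> 1" using inv unfolding e_def by (simp add: Suc_leI card_gt_0_iff)
  have mreal: "real m = real k + real e - 1" using inv(5) unfolding m_def e_def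
    by (metis of_nat_add of_nat_1 add_diff_cancel_right')
  define C :: real where "C = 1 / (2 * 4 ^ (e - 1))"
  define B :: real where "B = 4 * (real m + 1)"
  define N :: nat where "N = nat \<lceil>B powr (1 / (1 - r))\<rceil> + 1"
  have Bpos: "B > 0" unfolding B_def by simp
  have "C > 0" unfolding C_def by simp
  moreover have "\<forall>n\<ge>N. \<forall>(VX::nat set) EdX.
           k_hypergraph k VX EdX \<and> card VX = n \<and> real (card EdX) \<ge> real n powr (real k - r)
           \<longrightarrow> real (card (Inj V E VX EdX)) \<ge> C * real n powr (real (card V) - real (card E) * r)"
  proof (intro allI impI)
    fix n :: nat and VX :: "nat set" and EdX
    assume nN: "n \<ge> N"
    assume H: "k_hypergraph k VX EdX \<and> card VX = n \<and> real (card EdX) \<ge> real n powr (real k - r)"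
    have finVX: "finite VX" and edg: "\<forall>g\<in>EdX. g \<subseteq> VX \<and> card g = k" and cVX: "card VX = n"
      and many: "real (card EdX) \<ge> real n powr (real k - r)"
      using H unfolding k_hypergraph_def by auto
    have npos: "real n > 0" using nN unfolding N_def by simp
    define x where "x = real n powr (1 - r)"
    have xB: "x \<ge> B"
    proof -
      have "B powr (1 / (1 - r)) \<le> real n"
        using nN unfolding N_def by linarith
      then have "(B powr (1 / (1 - r))) powr (1 - r) \<le> real n powr (1 - r)"
        using assms(3) by (intro powr_mono2) auto
      also have "(B powr (1 / (1 - r))) powr (1 - r) = B"
        using Bpos assms(3) by (simp add: powr_powr)
      finally show ?thesis unfolding x_def .
    qed
    define d where "d = nat \<lfloor>x / 2\<rfloor>"
    have xpos: "x > 0" using xB Bpos by linarith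
    have d_le: "real d \<le> x / 2" unfolding d_def using xpos by linarith
    have d_ge: "real d \<ge> x / 2 - 1" unfolding d_def using xpos by linarith
    obtain F' where F': "F' \<subseteq> EdX" "closedF k d F'" "card EdX \<le> card F' + d * card (shadow k EdX)"
      using deletion[OF finVX, of EdX k d] edg by blast
    have sh: "card (shadow k EdX) \<le> n ^ (k - 1)" using shadow_card[OF finVX, of EdX k] edg cVX by auto
    have xn: "x * real n ^ (k - 1) = real n powr (real k - r)"
    proof -
      have "real n ^ (k - 1) = real n powr real (k - 1)" using npos by (simp add: powr_realpow)
      then have "x * real n ^ (k - 1) = real n powr ((1 - r) + real (k - 1))"
        unfolding x_def using npos by (simp add: powr_add)
      also have "(1 - r) + real (k - 1) = real k - r" using k1 by (simp add: of_nat_diff)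
      finally show ?thesis .
    qed
    have cF': "real (card F') \<ge> real n powr (real k - r) / 2"
    proof -
      have "real (card EdX) \<le> real (card F') + real d * real (card (shadow k EdX))"
        using F'(3) by (metis of_nat_add of_nat_le_iff of_nat_mult)
      also have "\<dots> \<le> real (card F') + (x / 2) * real n ^ (k - 1)"
      proof -
        have "real (card (shadow k EdX)) \<le> real n ^ (k - 1)" using sh by (metis of_nat_le_iff of_nat_power)
        then show ?thesis using d_le by (intro add_left_mono mult_mono) auto
      qed
      finally show ?thesis using many xn by (simp add: field_simps)
    qed
    have dm: "real (d - m) \<ge> x / 4"
    proof -
      have m0: "0 \<le> real m" by simp
      have x2: "x/2 \<ge> 2 * real m + 2" and x4: "x/4 \<ge> real m + 1" using xB unfolding B_def by simp_all
      have "real d \<ge> real m" using d_ge x2 m0 by simp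
      then have "real (d - m) = real d - real m" by (simp add: of_nat_diff)
      then show ?thesis using d_ge x4 by simp
    qed
    have "card F' * (d - m) ^ (e - 1) \<le> card (Inj V E VX F')"
      using count[OF assms(4) k1 finVX, of F' d] F' edg unfolding m_def e_def by blast
    also have "\<dots> \<le> card (Inj V E VX EdX)"
      using Inj_mono[OF F'(1)] Inj_finite[OF inv(1) finVX] by (intro card_mono) auto
    finally have main: "real (card F') * real (d - m) ^ (e - 1) \<le> real (card (Inj V E VX EdX))"
      by (metis of_nat_le_iff of_nat_mult of_nat_power)
    have "(real n powr (real k - r) / 2) * (x / 4) ^ (e - 1) \<le> real (card F') * real (d - m) ^ (e - 1)"
      using cF' dm xpos by (intro mult_mono power_mono) auto
    moreover have "(real n powr (real k - r) / 2) * (x / 4) ^ (e - 1)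
        = C * real n powr (real (card V) - real (card E) * r)"
    proof -
      have "x ^ (e - 1) = real n powr ((1 - r) * real (e - 1))"
        unfolding x_def using npos by (simp add: powr_powr powr_realpow[symmetric])
      then have "real n powr (real k - r) * x ^ (e - 1) = real n powr ((real k - r) + (1 - r) * real (e - 1))"
        by (simp add: powr_add)
      also have "(real k - r) + (1 - r) * real (e - 1) = real m - real e * r"
        using mreal e1 by (simp add: of_nat_diff algebra_simps)
      finally have "real n powr (real k - r) * x ^ (e - 1) = real n powr (real m - real e * r)" .
      then show ?thesis unfolding C_def m_def e_def by (simp add: power_divide field_simps)
    qed
    ultimately show "real (card (Inj V E VX EdX)) \<ge> C * real n powr (real (card V) - real (card E) * r)"
      using main by linarith
  qed
  ultimately show ?thesis by blast
qed

end
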